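(* (Uniqueness of bounded positive solutions.) Assume (F1)–(F3). Then the problem $\partial_tU_i=d_i\int_\Omega J_i(x,y)U_i(y,t)\,dy-d_i^*(x)U_i+f_i(x,t,U)$ in $Q_T$, $U_i(x,0)=U_i(x,T)$ on $\bar\Omega$, $i\in\mathbb S$, has at most one bounded positive solution $U$ in $\mathbb Z^m$ (continuity in $x$ is not required).
   Context: $\Omega\subset\mathbb R^N$ is a bounded domain with smooth boundary, $T>0$, $m\ge1$, $\mathbb S=\{1,\dots,m\}$, $Q_T=\bar\Omega\times(0,T]$, $\mathbb R^m_+=\{u\ge0\}$. For vectors: $u\ge v$ componentwise; $u>v$ means $u\ge v$, $u\ne v$; $u\gg v$ means $u_i>v_i$ for all $i$. A positive solution means $U\gg0$ in $\bar Q_T$. $\mathbb Z^m$ is the set of $u\in[L^\infty(Q_T)]^m$ with $u_i(x,\cdot)\in C^1([0,T])$ for every $x\in\bar\Omega$. For each $i$, $d_i>0$, $J_i:\mathbb R^{2N}\to[0,\infty)$ continuous with $J_i(x,x)>0$, $\int_{\mathbb R^N}J_i(x,y)\,dy=1$, and $d_i^*(x)$ is either $d_i$ or $d_i\int_\Omega J_i(y,x)\,dy$. (F1): each $f_i$ is $T$-periodic in $t$, $f_i(x,t,0)=0$, $f_i\in C^{0,0,1}(\bar Q_T\times\mathbb R^m_+)$, and $\partial_{u_k}f_i(x,t,u)\ge0$ for $u\ge0$, $k\ne i$. (F2): there is $(x_0,t_0)\in\bar Q_T$ with $(\partial_{u_k}f_i(x_0,t_0,u))_{m\times m}$ irreducible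 for all $u\ge0$. (F3): $f(x,t,\rho u)>\rho f(x,t,u)$ for all $\rho\in(0,1)$, $(x,t)\in\bar Q_T$, $u\gg0$. *)

theory Defs
  imports "HOL-Analysis.Analysis"
begin

definition vge :: "real^'m \<Rightarrow> real^'m \<Rightarrow> bool" where
  "vge u v \<longleftrightarrow> (\<forall>i. v$i \<le> u$i)"

definition vgt :: "real^'m \<Rightarrow> real^'m \<Rightarrow> bool" where
  "vgt u v \<longleftrightarrow> vge u v \<and> u \<noteq> v"

definition vgg :: "real^'m \<Rightarrow> real^'m \<Rightarrow> bool" where
  "vgg u v \<longleftrightarrow> (\<forall>i. v$i < u$i)"

definition nonneg_orthant :: "(real^'m) set" where
  "nonneg_orthant = {u. \<forall>i. 0 \<le> u$i}"

definition irreducible_matrix :: "('m \<Rightarrow> 'm \<Rightarrow> real) \<Rightarrow> bool" where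
  "irreducible_matrix A \<longleftrightarrow>
     \<not> (\<exists>I. I \<noteq> {} \<and> I \<noteq> UNIV \<and> (\<forall>i\<in>I. \<forall>j. j \<notin> I \<longrightarrow> A i j = 0))"

definition C1_on :: "real set \<Rightarrow> (real \<Rightarrow> real) \<Rightarrow> bool" where
  "C1_on S g \<longleftrightarrow> (\<exists>g'. (\<forall>t\<in>S. (g has_real_derivative g' t) (at t within S))
                         \<and> continuous_on S g')"

definition in_Linf :: "('a::euclidean_space) set \<Rightarrow> ('a \<Rightarrow> real) \<Rightarrow> bool" where
  "in_Linf Q g \<longleftrightarrow> g \<in> borel_measurable (lebesgue_on Q)
                    \<and> (\<exists>C. AE z in lebesgue_on Q. \<bar>g z\<bar> \<le> C)"

definition Z_space :: "(real^'n) set \<Rightarrow> real \<Rightarrow> (real^'n \<Rightarrow> real \<Rightarrow> real^'m) \<Rightarrow> bool" where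
  "Z_space \<Omega> T U \<longleftrightarrow>
     (\<forall>i. in_Linf (closure \<Omega> \<times> {0<..T}) (\<lambda>(x,t). U x t $ i)) \<and>
     (\<forall>x\<in>closure \<Omega>. \<forall>i. C1_on {0..T} (\<lambda>t. U x t $ i))"

definition is_periodic_solution ::
  "(real^'n) set \<Rightarrow> real \<Rightarrow> ('m \<Rightarrow> real) \<Rightarrow> ('m \<Rightarrow> real^'n \<Rightarrow> real^'n \<Rightarrow> real)
   \<Rightarrow> ('m \<Rightarrow> real^'n \<Rightarrow> real) \<Rightarrow> ('m \<Rightarrow> real^'n \<Rightarrow> real \<Rightarrow> real^'m \<Rightarrow> real)
   \<Rightarrow> (real^'n \<Rightarrow> real \<Rightarrow> real^'m) \<Rightarrow> bool" where
  "is_periodic_solution \<Omega> T d J dstar f U \<longleftrightarrow>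
     (\<forall>i. \<forall>x\<in>closure \<Omega>. \<forall>t\<in>{0<..T}.
        set_integrable lebesgue \<Omega> (\<lambda>y. J i x y * U y t $ i)) \<and>
     (\<forall>i. \<forall>x\<in>closure \<Omega>. \<forall>t\<in>{0<..T}.
        ((\<lambda>s. U x s $ i) has_real_derivative
           (d i * (LINT y:\<Omega>|lebesgue. J i x y * U y t $ i)
            - dstar i x * U x t $ i + f i x t (U x t))) (at t within {0..T})) \<and>
     (\<forall>i. \<forall>x\<in>closure \<Omega>. U x 0 $ i = U x T $ i)"

definition bounded_positive :: "(real^'n) set \<Rightarrow> real \<Rightarrow> (real^'n \<Rightarrow> real \<Rightarrow> real^'m) \<Rightarrow> bool" where
  "bounded_positive \<Omega> T U \<longleftrightarrow>
     (\<exists>C. \<forall>x\<in>closure \<Omega>. \<forall>t\<in>{0..T}. norm (U x t) \<le> C) \<and>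
     (\<forall>x\<in>closure \<Omega>. \<forall>t\<in>{0..T}. vgg (U x t) 0)"

end

theory Submission
  imports Defs
begin


lemma open_not_null:
  fixes G :: "'a::euclidean_space set"
  assumes "open G" "G \<noteq> {}" "AE y in lebesgue. y \<in> G \<longrightarrow> False"
  shows False
proof -
  obtain z where z: "z \<in> G" using assms(2) by auto
  then obtain r where r: "r > 0" "ball z r \<subseteq> G" using assms(1) open_contains_ball by blast
  have "AE y in lebesgue. y \<notin> ball z r" using assms(3) r(2) by (auto elim!: eventually_mono)
  hence "emeasure lebesgue (ball z r) = 0"
    by (subst (asm) AE_iff_measurable[of "ball z r"]) auto
  hence "measure lebesgue (ball z r) = 0" by (simp add: measure_def)
  moreover have "measure lebesgue (ball z r) = measure lborel (ball z r)"
    by (simp add: measure_completion)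
  ultimately show False using content_ball_pos[OF r(1), of z] by simp
qed

lemma mono_from_deriv:
  fixes g g' :: "real \<Rightarrow> real"
  assumes cont: "continuous_on {0..T} g"
    and der: "\<And>t. t \<in> {0<..T} \<Longrightarrow> (g has_real_derivative g' t) (at t within {0..T})"
    and nn: "\<And>t. t \<in> {0<..T} \<Longrightarrow> g' t \<ge> 0"
    and ab: "0 \<le> a" "a \<le> b" "b \<le> T"
  shows "g a \<le> g b"
proof (rule DERIV_nonneg_imp_increasing_open[OF ab(2)])
  fix x assume x: "a < x" "x < b"
  have "(g has_real_derivative g' x) (at x within {0..T})" using der x ab by auto
  moreover have "at x within {0..T} = at x" using x ab by (intro at_within_Icc_at) auto
  ultimately show "\<exists>y. (g has_real_derivative y) (at x) \<and> 0 \<le> y" using nn x ab by auto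
next
  show "continuous_on {a..b} g" by (rule continuous_on_subset[OF cont]) (use ab in auto)
qed

lemma exp_deriv_aux:
  fixes w w' :: "real \<Rightarrow> real"
  assumes "(w has_real_derivative w' t) (at t within S)"
  shows "((\<lambda>s. exp (K * s) * w s) has_real_derivative exp (K * t) * (w' t + K * w t)) (at t within S)"
proof -
  have "((\<lambda>s. exp (K * s)) has_real_derivative exp (K * t) * K) (at t within S)"
    by (auto intro!: derivative_eq_intros)
  from DERIV_mult[OF this assms] show ?thesis by (simp add: algebra_simps)
qed

locale ode =
  fixes T K :: real and w w' :: "real \<Rightarrow> real"
  assumes T: "T > 0" and K: "K > 0"
    and cont: "continuous_on {0..T} w"
    and der: "\<And>t. t \<in> {0<..T} \<Longrightarrow> (w has_real_derivative w' t) (at t within {0..T})"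
    and per: "w 0 = w T"
    and nn: "\<And>t. t \<in> {0..T} \<Longrightarrow> w t \<ge> 0"
    and hnn: "\<And>t. t \<in> {0<..T} \<Longrightarrow> w' t + K * w t \<ge> 0"
begin

lemma g_mono:
  assumes "0 \<le> a" "a \<le> b" "b \<le> T"
  shows "exp (K * a) * w a \<le> exp (K * b) * w b"
proof (rule mono_from_deriv[where g' = "\<lambda>t. exp (K * t) * (w' t + K * w t)" and g = "\<lambda>s. exp (K * s) * w s"])
  show "continuous_on {0..T} (\<lambda>s. exp (K * s) * w s)"
    by (intro continuous_intros cont)
qed (use assms exp_deriv_aux der hnn in auto)

lemma decay:
  assumes "t \<in> {0..T}"
  shows "w t \<ge> exp (-K * T) * w T"
proof -
  have "exp (K * 0) * w 0 \<le> exp (K * t) * w t" using g_mono[of 0 t] assms by auto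
  hence "w T \<le> exp (K * t) * w t" using per by simp
  hence "exp (-K * t) * w T \<le> w t"
    by (simp add: exp_minus field_simps)
  moreover have "exp (-K * T) * w T \<le> exp (-K * t) * w T"
    using assms K nn[of T] T by (intro mult_right_mono) auto
  ultimately show ?thesis by linarith
qed

lemma pos:
  assumes t1: "t1 \<in> {0<..T}" and h1: "w' t1 + K * w t1 > 0"
    and t: "t \<in> {0..T}"
  shows "w t > 0"
proof (rule ccontr)
  assume "\<not> w t > 0"
  hence wt: "w t = 0" using nn[OF t] by auto
  have "exp (K * 0) * w 0 \<le> exp (K * t) * w t" using g_mono[of 0 t] t by auto
  hence w0: "w 0 = 0" using wt nn[of 0] T by auto
  define g where "g = (\<lambda>s. exp (K * s) * w s)"
  have g0: "g s = 0" if "s \<in> {0..T}" for s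
  proof -
    have "g 0 \<le> g s" "g s \<le> g T" using g_mono[of 0 s] g_mono[of s T] that unfolding g_def by auto
    thus ?thesis using w0 per unfolding g_def by auto
  qed
  have "(g has_real_derivative exp (K * t1) * (w' t1 + K * w t1)) (at t1 within {0..T})"
    unfolding g_def using exp_deriv_aux der t1 by blast
  from has_real_derivative_pos_inc_left[OF this] h1 obtain dd where
    dd: "dd > 0" "\<And>h. h > 0 \<Longrightarrow> t1 - h \<in> {0..T} \<longrightarrow> h < dd \<longrightarrow> g (t1 - h) < g t1" by auto
  define h where "h = min dd t1 / 2"
  have "h > 0" "h < dd" "t1 - h \<in> {0..T}" using dd t1 unfolding h_def by auto
  hence "g (t1 - h) < g t1" using dd by auto
  thus False using g0[of "t1 - h"] g0[of t1] \<open>t1 - h \<in> {0..T}\<close> t1 by auto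
qed

lemma lower:
  assumes a: "a > 0" and ha: "\<And>t. t \<in> {0<..T} \<Longrightarrow> w' t + K * w t \<ge> a"
    and t: "t \<in> {0..T}"
  shows "w t \<ge> exp (-K * T) * (a * T / (exp (K * T) - 1))"
proof -
  have "exp (K * 0) * w 0 - a * 0 \<le> exp (K * T) * w T - a * T"
  proof (rule mono_from_deriv[where g' = "\<lambda>t. exp (K * t) * (w' t + K * w t) - a"
        and g = "\<lambda>s. exp (K * s) * w s - a * s"])
    show "continuous_on {0..T} (\<lambda>s. exp (K * s) * w s - a * s)"
      by (intro continuous_intros cont)
    fix s assume s: "s \<in> {0<..T}"
    show "((\<lambda>s. exp (K * s) * w s - a * s) has_real_derivative exp (K * s) * (w' s + K * w s) - a)
      (at s within {0..T})"
      using DERIV_diff[OF exp_deriv_aux[of w w' s _ K, OF der[OF s]], of "\<lambda>s. a * s" a] 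
      by (auto intro!: derivative_eq_intros)
    have "exp (K * s) \<ge> 1" using s K by auto
    hence "exp (K * s) * (w' s + K * w s) \<ge> 1 * a" using ha[OF s] a
      by (intro mult_mono) auto
    thus "exp (K * s) * (w' s + K * w s) - a \<ge> 0" by simp
  qed (use T in auto)
  hence "w T * (exp (K * T) - 1) \<ge> a * T" using per by (simp add: algebra_simps)
  moreover have "exp (K * T) - 1 > 0" using K T by auto
  ultimately have wT: "w T \<ge> a * T / (exp (K * T) - 1)" by (simp add: field_simps)
  have "exp (-K * T) * (a * T / (exp (K * T) - 1)) \<le> exp (-K * T) * w T"
    using wT by (intro mult_left_mono) auto
  also have "\<dots> \<le> w t" using decay[OF t] .
  finally show ?thesis .
qed

end


lemma finite_min_pos:
  fixes P :: "'a \<Rightarrow> real \<Rightarrow> bool"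
  assumes "finite A" "\<And>i. i \<in> A \<Longrightarrow> \<exists>r>0. P i r"
    and mono: "\<And>i r r'. P i r \<Longrightarrow> 0 < r' \<Longrightarrow> r' \<le> r \<Longrightarrow> P i r'"
  shows "\<exists>r>0. \<forall>i\<in>A. P i r"
  using assms(1,2)
proof (induction A rule: finite_induct)
  case empty show ?case by (rule exI[of _ 1]) simp
next
  case (insert a A)
  then obtain r where r: "r > 0" "\<forall>i\<in>A. P i r" by auto
  obtain r' where r': "r' > 0" "P a r'" using insert.prems by auto
  show ?case
    by (rule exI[of _ "min r r'"]) (use r r' mono in auto)
qed

lemma set_integral_bound_const:
  fixes g :: "'a::euclidean_space \<Rightarrow> real"
  assumes S: "S \<in> lmeasurable" and g: "set_integrable lebesgue S g"
    and b: "\<And>y. y \<in> S \<Longrightarrow> \<bar>g y\<bar> \<le> c"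
  shows "\<bar>LINT y:S|lebesgue. g y\<bar> \<le> c * measure lebesgue S"
proof -
  have "\<bar>LINT y:S|lebesgue. g y\<bar> \<le> (LINT y:S|lebesgue. norm (g y))"
    using set_integral_norm_bound[OF g] by simp
  also have "\<dots> \<le> (LINT y:S|lebesgue. c)"
    using set_integrable_norm[OF g] absolutely_integrable_on_const[OF S] b
    by (intro set_integral_mono) auto
  also have "\<dots> = measure lebesgue S * c"
    using S by (subst set_integral_const) (auto simp: fmeasurable_def)
  finally show ?thesis by (simp add: mult.commute)
qed


lemma orthant_closed: "closed (nonneg_orthant :: (real^'a) set)"
proof -
  have "nonneg_orthant = (\<Inter>i. {u::real^'a. 0 \<le> u $ i})" unfolding nonneg_orthant_def by auto
  moreover have "closed {u::real^'a. 0 \<le> u $ i}" for i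
    by (intro closed_Collect_le continuous_intros)
  ultimately show ?thesis by (metis closed_INT)
qed

locale uniq =
  fixes \<Omega> :: "(real^'n) set" and T :: real
    and d :: "'m::finite \<Rightarrow> real"
    and J :: "'m \<Rightarrow> real^'n \<Rightarrow> real^'n \<Rightarrow> real"
    and dstar :: "'m \<Rightarrow> real^'n \<Rightarrow> real"
    and f :: "'m \<Rightarrow> real^'n \<Rightarrow> real \<Rightarrow> real^'m \<Rightarrow> real"
    and Df :: "'m \<Rightarrow> 'm \<Rightarrow> real^'n \<Rightarrow> real \<Rightarrow> real^'m \<Rightarrow> real"
    and U V :: "real^'n \<Rightarrow> real \<Rightarrow> real^'m"
  assumes dom: "open \<Omega>" "connected \<Omega>" "bounded \<Omega>" "\<Omega> \<noteq> {}"
    and T_pos: "T > 0"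
    and d_pos: "\<And>i. d i > 0"
    and J_cont: "\<And>i. continuous_on UNIV (\<lambda>(x,y). J i x y)"
    and J_nonneg: "\<And>i x y. J i x y \<ge> 0"
    and J_diag: "\<And>i x. J i x x > 0"
    and dstar_def: "\<And>i. dstar i = (\<lambda>x. d i)
                       \<or> dstar i = (\<lambda>x. d i * (LINT y:\<Omega>|lebesgue. J i y x))"
    and F1_zero: "\<And>i x t. f i x t 0 = 0"
    and F1_Dcont: "\<And>i k. continuous_on (closure \<Omega> \<times> {0..T} \<times> nonneg_orthant)
                         (\<lambda>(x,t,u). Df i k x t u)"
    and F1_deriv: "\<And>i x t u. x \<in> closure \<Omega> \<Longrightarrow> t \<in> {0..T} \<Longrightarrow> u \<in> nonneg_orthant \<Longrightarrow>
                     (f i x t has_derivative (\<lambda>h. \<Sum>k\<in>UNIV. Df i k x t u * h $ k))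
                       (at u within nonneg_orthant)"
    and F1_coop: "\<And>i k x t u. x \<in> closure \<Omega> \<Longrightarrow> t \<in> {0..T} \<Longrightarrow> u \<in> nonneg_orthant \<Longrightarrow>
                     k \<noteq> i \<Longrightarrow> Df i k x t u \<ge> 0"
    and F2: "\<exists>x0\<in>closure \<Omega>. \<exists>t0\<in>{0..T}. \<forall>u\<in>nonneg_orthant.
               irreducible_matrix (\<lambda>i k. Df i k x0 t0 u)"
    and F3: "\<And>\<rho> x t u. 0 < \<rho> \<Longrightarrow> \<rho> < 1 \<Longrightarrow> x \<in> closure \<Omega> \<Longrightarrow> t \<in> {0..T} \<Longrightarrow>
               vgg u 0 \<Longrightarrow> vgt (\<chi> i. f i x t (\<rho> *\<^sub>R u)) (\<rho> *\<^sub>R (\<chi> i. f i x t u))"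
    and U_Z: "Z_space \<Omega> T U" and U_sol: "is_periodic_solution \<Omega> T d J dstar f U"
    and U_bp: "bounded_positive \<Omega> T U"
    and V_Z: "Z_space \<Omega> T V" and V_sol: "is_periodic_solution \<Omega> T d J dstar f V"
    and V_bp: "bounded_positive \<Omega> T V"
begin

abbreviation "cl \<equiv> closure \<Omega>"

definition kU :: "'m \<Rightarrow> real^'n \<Rightarrow> real \<Rightarrow> real" where
  "kU i x t = (LINT y:\<Omega>|lebesgue. J i x y * U y t $ i)"
definition kV :: "'m \<Rightarrow> real^'n \<Rightarrow> real \<Rightarrow> real" where
  "kV i x t = (LINT y:\<Omega>|lebesgue. J i x y * V y t $ i)"

lemma Om_meas: "\<Omega> \<in> lmeasurable" using dom lmeasurable_open by blast
lemma Om_sets: "\<Omega> \<in> sets lebesgue" using Om_meas by (simp add: fmeasurable_def)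
lemma Om_cl: "\<Omega> \<subseteq> cl" by (rule closure_subset)
lemma cl_compact: "compact cl" using dom(3) by (simp add: compact_closure)
lemma cl_ne: "cl \<noteq> {}" using dom(4) by simp

lemma U_cont: "x \<in> cl \<Longrightarrow> continuous_on {0..T} (\<lambda>t. U x t $ i)"
  using U_Z unfolding Z_space_def C1_on_def by (metis DERIV_continuous_on)
lemma V_cont: "x \<in> cl \<Longrightarrow> continuous_on {0..T} (\<lambda>t. V x t $ i)"
  using V_Z unfolding Z_space_def C1_on_def by (metis DERIV_continuous_on)

lemma U_int: "x \<in> cl \<Longrightarrow> t \<in> {0<..T} \<Longrightarrow> set_integrable lebesgue \<Omega> (\<lambda>y. J i x y * U y t $ i)"
  using U_sol unfolding is_periodic_solution_def by blast
lemma V_int: "x \<in> cl \<Longrightarrow> t \<in> {0<..T} \<Longrightarrow> set_integrable lebesgue \<Omega> (\<lambda>y. J i x y * V y t $ i)"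
  using V_sol unfolding is_periodic_solution_def by blast

lemma U_der: "x \<in> cl \<Longrightarrow> t \<in> {0<..T} \<Longrightarrow> ((\<lambda>s. U x s $ i) has_real_derivative
   (d i * kU i x t - dstar i x * U x t $ i + f i x t (U x t))) (at t within {0..T})"
  using U_sol unfolding is_periodic_solution_def kU_def by blast
lemma V_der: "x \<in> cl \<Longrightarrow> t \<in> {0<..T} \<Longrightarrow> ((\<lambda>s. V x s $ i) has_real_derivative
   (d i * kV i x t - dstar i x * V x t $ i + f i x t (V x t))) (at t within {0..T})"
  using V_sol unfolding is_periodic_solution_def kV_def by blast

lemma U_per: "x \<in> cl \<Longrightarrow> U x 0 $ i = U x T $ i"
  using U_sol unfolding is_periodic_solution_def by blast
lemma V_per: "x \<in> cl \<Longrightarrow> V x 0 $ i = V x T $ i"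
  using V_sol unfolding is_periodic_solution_def by blast

lemma U_pos: "x \<in> cl \<Longrightarrow> t \<in> {0..T} \<Longrightarrow> U x t $ i > 0"
  using U_bp unfolding bounded_positive_def vgg_def by auto
lemma V_pos: "x \<in> cl \<Longrightarrow> t \<in> {0..T} \<Longrightarrow> V x t $ i > 0"
  using V_bp unfolding bounded_positive_def vgg_def by auto

lemma B_ex: "\<exists>B>0. \<forall>x\<in>cl. \<forall>t\<in>{0..T}. norm (U x t) \<le> B \<and> norm (V x t) \<le> B"
proof -
  obtain B1 where B1: "\<forall>x\<in>cl. \<forall>t\<in>{0..T}. norm (U x t) \<le> B1"
    using U_bp unfolding bounded_positive_def by auto
  obtain B2 where B2: "\<forall>x\<in>cl. \<forall>t\<in>{0..T}. norm (V x t) \<le> B2"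
    using V_bp unfolding bounded_positive_def by auto
  show ?thesis
    by (rule exI[of _ "max 1 (max B1 B2)"]) (use B1 B2 in force)
qed

definition "Bd = (SOME B. B>0 \<and> (\<forall>x\<in>cl. \<forall>t\<in>{0..T}. norm (U x t) \<le> B \<and> norm (V x t) \<le> B))"
lemma Bd: "Bd > 0" "x \<in> cl \<Longrightarrow> t \<in> {0..T} \<Longrightarrow> norm (U x t) \<le> Bd"
   "x \<in> cl \<Longrightarrow> t \<in> {0..T} \<Longrightarrow> norm (V x t) \<le> Bd"
  using someI_ex[OF B_ex] unfolding Bd_def[symmetric] by auto

definition "Kset = (nonneg_orthant \<inter> cball 0 Bd :: (real^'m) set)"

lemma Kset_compact: "compact Kset"
  unfolding Kset_def using orthant_closed by (intro closed_Int_compact) auto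

lemma zero_Kset: "0 \<in> Kset" using Bd unfolding Kset_def nonneg_orthant_def by auto

lemma Kc_compact: "compact (cl \<times> {0..T} \<times> Kset)"
  using cl_compact Kset_compact by (intro compact_Times) auto

lemma Kc_sub: "cl \<times> {0..T} \<times> Kset \<subseteq> cl \<times> {0..T} \<times> nonneg_orthant"
  unfolding Kset_def by auto

lemma L_ex: "\<exists>L\<ge>0. \<forall>i k x t (u::real^'m). x \<in> cl \<longrightarrow> t \<in> {0..T} \<longrightarrow> u \<in> Kset \<longrightarrow> \<bar>Df i k x t u\<bar> \<le> L"
proof -
  let ?g = "\<lambda>(x,t,u). \<Sum>i\<in>UNIV. \<Sum>k\<in>UNIV. \<bar>Df i k x t u\<bar>"
  have "continuous_on (cl \<times> {0..T} \<times> Kset) ?g"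
  proof -
    have "continuous_on (cl \<times> {0..T} \<times> Kset) (\<lambda>p. \<Sum>i\<in>UNIV. \<Sum>k\<in>UNIV. \<bar>(\<lambda>(x,t,u). Df i k x t u) p\<bar>)"
      using continuous_on_subset[OF F1_Dcont Kc_sub]
      by (intro continuous_intros) auto
    thus ?thesis by (simp add: case_prod_beta)
  qed
  then have "bounded (?g ` (cl \<times> {0..T} \<times> Kset))"
    using Kc_compact by (intro compact_imp_bounded compact_continuous_image)
  then obtain L where L: "\<And>p. p \<in> cl \<times> {0..T} \<times> Kset \<Longrightarrow> \<bar>?g p\<bar> \<le> L"
    unfolding bounded_iff by auto
  show ?thesis
  proof (rule exI[of _ "max L 0"], safe)
    fix i k x t u assume p: "x \<in> cl" "t \<in> {0..T}" "u \<in> Kset"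
    have "\<bar>Df i k x t u\<bar> \<le> (\<Sum>k\<in>UNIV. \<bar>Df i k x t u\<bar>)"
      by (rule member_le_sum) auto
    also have "\<dots> \<le> (\<Sum>i\<in>UNIV. \<Sum>k\<in>UNIV. \<bar>Df i k x t u\<bar>)"
      by (rule member_le_sum[where f = "\<lambda>i. \<Sum>k\<in>UNIV. \<bar>Df i k x t u\<bar>"]) (auto intro: sum_nonneg)
    also have "\<dots> \<le> L" using L[of "(x,t,u)"] p by auto
    finally show "\<bar>Df i k x t u\<bar> \<le> max L 0" by simp
  qed simp
qed

definition "Ld = (SOME L. L\<ge>0 \<and> (\<forall>i k x t (u::real^'m). x \<in> cl \<longrightarrow> t \<in> {0..T} \<longrightarrow> u \<in> Kset \<longrightarrow> \<bar>Df i k x t u\<bar> \<le> L))"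
lemma Ld: "Ld \<ge> 0" "x \<in> cl \<Longrightarrow> t \<in> {0..T} \<Longrightarrow> u \<in> Kset \<Longrightarrow> \<bar>Df i k x t u\<bar> \<le> Ld"
  using someI_ex[OF L_ex] unfolding Ld_def[symmetric] by auto

lemma J_bound_ex: "\<exists>M. \<forall>i. \<forall>x\<in>cl. \<forall>y\<in>cl. \<bar>J i x y\<bar> \<le> M"
proof -
  let ?g = "\<lambda>(x,y). \<Sum>i\<in>UNIV. \<bar>J i x y\<bar>"
  have "continuous_on (cl \<times> cl) (\<lambda>p. \<Sum>i\<in>UNIV. \<bar>(\<lambda>(x,y). J i x y) p\<bar>)"
    using continuous_on_subset[OF J_cont] by (intro continuous_intros) auto
  hence "continuous_on (cl \<times> cl) ?g" by (simp add: case_prod_beta)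
  then have "bounded (?g ` (cl \<times> cl))"
    using cl_compact by (intro compact_imp_bounded compact_continuous_image compact_Times)
  then obtain M where M: "\<forall>p\<in>cl \<times> cl. \<bar>?g p\<bar> \<le> M"
    unfolding bounded_iff by auto
  show ?thesis
  proof (intro exI allI ballI)
    fix i x y assume p: "x \<in> cl" "y \<in> cl"
    have "\<bar>J i x y\<bar> \<le> (\<Sum>i\<in>UNIV. \<bar>J i x y\<bar>)" by (rule member_le_sum) auto
    also have "\<dots> \<le> M" using M p by force
    finally show "\<bar>J i x y\<bar> \<le> M" .
  qed
qed

lemma D_ex: "\<exists>D. \<forall>i. \<forall>x\<in>cl. dstar i x \<le> D"
proof -
  obtain M where M: "\<And>i x y. x \<in> cl \<Longrightarrow> y \<in> cl \<Longrightarrow> \<bar>J i x y\<bar> \<le> M" using J_bound_ex by auto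
  have "dstar i x \<le> (\<Sum>i\<in>UNIV. d i) * (1 + M * measure lebesgue \<Omega>)" if x: "x \<in> cl" for i x
  proof -
    have "\<bar>LINT y:\<Omega>|lebesgue. J i y x\<bar> \<le> M * measure lebesgue \<Omega>"
    proof (cases "set_integrable lebesgue \<Omega> (\<lambda>y. J i y x)")
      case True
      show ?thesis by (rule set_integral_bound_const[OF Om_meas True]) (use M x Om_cl in auto)
    next
      case False
      hence "(LINT y:\<Omega>|lebesgue. J i y x) = 0"
        unfolding set_lebesgue_integral_def set_integrable_def by (simp add: not_integrable_integral_eq)
      moreover have "M \<ge> 0" using M[OF x x, of i] by (meson abs_ge_zero order_trans)
      ultimately show ?thesis by simp
    qed
    hence L1: "(LINT y:\<Omega>|lebesgue. J i y x) \<le> 1 + M * measure lebesgue \<Omega>" by simp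
    have "M \<ge> 0" using M[OF x x, of i] by (meson abs_ge_zero order_trans)
    hence M0': "0 \<le> M * measure lebesgue \<Omega>" by (simp add: measure_nonneg)
    hence M0: "0 \<le> 1 + M * measure lebesgue \<Omega>" by simp
    have di: "d i \<le> (\<Sum>i\<in>UNIV. d i)" by (rule member_le_sum) (use d_pos less_imp_le in auto)
    from dstar_def[of i] show ?thesis
    proof
      assume "dstar i = (\<lambda>x. d i)"
      hence "dstar i x = d i * 1" by simp
      also have "\<dots> \<le> (\<Sum>i\<in>UNIV. d i) * (1 + M * measure lebesgue \<Omega>)"
        using di M0 M0' d_pos[of i] by (intro mult_mono) (auto simp: measure_nonneg)
      finally show ?thesis .
    next
      assume "dstar i = (\<lambda>x. d i * (LINT y:\<Omega>|lebesgue. J i y x))"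
      hence "dstar i x = d i * (LINT y:\<Omega>|lebesgue. J i y x)" by simp
      also have "\<dots> \<le> d i * (1 + M * measure lebesgue \<Omega>)"
        using L1 d_pos[of i] by (intro mult_left_mono) auto
      also have "\<dots> \<le> (\<Sum>i\<in>UNIV. d i) * (1 + M * measure lebesgue \<Omega>)"
        using di M0 by (intro mult_right_mono) auto
      finally show ?thesis .
    qed
  qed
  thus ?thesis by blast
qed

definition "Dd = (SOME D. \<forall>i. \<forall>x\<in>cl. dstar i x \<le> D)"
lemma Dd: "x \<in> cl \<Longrightarrow> dstar i x \<le> Dd"
  using someI_ex[OF D_ex] unfolding Dd_def[symmetric] by auto

definition "Cc = \<bar>Dd\<bar> + Ld + 1"
lemma Cc: "Cc > 0" "x \<in> cl \<Longrightarrow> Cc - dstar i x - Ld \<ge> 1"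
  using Ld(1) Dd[of x i] unfolding Cc_def by auto


lemma k_cont:
  fixes \<phi> :: "real^'n \<Rightarrow> real"
  assumes bnd: "\<And>y. y \<in> \<Omega> \<Longrightarrow> \<bar>\<phi> y\<bar> \<le> M"
    and int: "\<And>x. x \<in> cl \<Longrightarrow> set_integrable lebesgue \<Omega> (\<lambda>y. J i x y * \<phi> y)"
  shows "continuous_on cl (\<lambda>x. LINT y:\<Omega>|lebesgue. J i x y * \<phi> y)"
proof (rule uniformly_continuous_imp_continuous, unfold uniformly_continuous_on_def, intro allI impI)
  fix e :: real assume e: "e > 0"
  have uc: "uniformly_continuous_on (cl \<times> cl) (\<lambda>(x,y). J i x y)"
    using cl_compact continuous_on_subset[OF J_cont]
    by (intro compact_uniformly_continuous compact_Times) auto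
  define M' where "M' = \<bar>M\<bar> + 1"
  define m where "m = measure lebesgue \<Omega>"
  have M'0: "M' > 0" and m0: "m \<ge> 0" unfolding M'_def m_def by (auto simp: measure_nonneg)
  define e' where "e' = e / (M' * (m + 1))"
  have e'0: "e' > 0" unfolding e'_def using e M'0 m0 by auto
  obtain dd where dd: "dd > 0" "\<And>p p'. p \<in> cl \<times> cl \<Longrightarrow> p' \<in> cl \<times> cl \<Longrightarrow> dist p' p < dd \<Longrightarrow>
      dist ((\<lambda>(x,y). J i x y) p') ((\<lambda>(x,y). J i x y) p) < e'"
    using uc e'0 unfolding uniformly_continuous_on_def by metis
  show "\<exists>d>0. \<forall>x\<in>cl. \<forall>x'\<in>cl. dist x' x < d \<longrightarrow>
      dist (LINT y:\<Omega>|lebesgue. J i x' y * \<phi> y) (LINT y:\<Omega>|lebesgue. J i x y * \<phi> y) < e"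
  proof (intro exI[of _ dd] conjI ballI impI dd(1))
    fix x x' assume x: "x \<in> cl" and x': "x' \<in> cl" and dx: "dist x' x < dd"
    have "dist (LINT y:\<Omega>|lebesgue. J i x' y * \<phi> y) (LINT y:\<Omega>|lebesgue. J i x y * \<phi> y)
        = \<bar>LINT y:\<Omega>|lebesgue. J i x' y * \<phi> y - J i x y * \<phi> y\<bar>"
      using int[OF x] int[OF x'] by (simp add: dist_real_def set_integral_diff)
    also have "\<dots> \<le> (e' * M') * m"
      unfolding m_def
    proof (rule set_integral_bound_const[OF Om_meas])
      show "set_integrable lebesgue \<Omega> (\<lambda>y. J i x' y * \<phi> y - J i x y * \<phi> y)"
        using int[OF x] int[OF x'] by auto
      fix y assume y: "y \<in> \<Omega>"
      have "dist (x', y) (x, y) = dist x' x" by (simp add: dist_Pair_Pair)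
      hence "\<bar>J i x' y - J i x y\<bar> < e'"
        using dd(2)[of "(x,y)" "(x',y)"] x x' y Om_cl dx by (auto simp: dist_real_def)
      moreover have "\<bar>\<phi> y\<bar> \<le> M'" using bnd[OF y] unfolding M'_def by auto
      ultimately have "\<bar>J i x' y - J i x y\<bar> * \<bar>\<phi> y\<bar> \<le> e' * M'"
        by (intro mult_mono) auto
      thus "\<bar>J i x' y * \<phi> y - J i x y * \<phi> y\<bar> \<le> e' * M'"
        by (simp add: abs_mult left_diff_distrib[symmetric])
    qed
    also have "\<dots> < e"
    proof -
      have pos: "M' * (m + 1) > 0" using M'0 m0 by auto
      have "(e' * M') * m = e * (m / (m + 1))" unfolding e'_def using M'0 m0 pos
        by (simp add: field_split_simps)
      also have "\<dots> < e * 1" using e m0 by (intro mult_strict_left_mono) auto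
      finally show ?thesis by simp
    qed
    finally show "dist (LINT y:\<Omega>|lebesgue. J i x' y * \<phi> y) (LINT y:\<Omega>|lebesgue. J i x y * \<phi> y) < e" .
  qed
qed

lemma J_pos_ball: "\<exists>r>0. \<forall>y\<in>ball x r. J i x y > 0"
proof -
  have "continuous_on UNIV (\<lambda>y. (\<lambda>(x,y). J i x y) (x, y))"
    by (intro continuous_on_compose2[OF J_cont] continuous_intros) auto
  hence "open ((\<lambda>y. J i x y) -` {0<..})"
    by (intro open_vimage) auto
  moreover have "x \<in> (\<lambda>y. J i x y) -` {0<..}" using J_diag by auto
  ultimately obtain r where "r > 0" "ball x r \<subseteq> (\<lambda>y. J i x y) -` {0<..}"
    using open_contains_ball by blast
  thus ?thesis by auto
qed

end


context uniq begin

definition "W \<rho> i x t = U x t $ i - \<rho> * V x t $ i"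
definition "kW \<rho> i x t = (LINT y:\<Omega>|lebesgue. J i x y * W \<rho> i y t)"
definition "W' \<rho> i x t = d i * kW \<rho> i x t - dstar i x * W \<rho> i x t
     + (f i x t (U x t) - \<rho> * f i x t (V x t))"
definition "hW \<rho> i x t = W' \<rho> i x t + Cc * W \<rho> i x t"
definition "P \<rho> i x = (\<forall>t\<in>{0..T}. W \<rho> i x t > 0)"
definition "locnull \<rho> i x = (\<exists>r>0. AE y in lebesgue. y \<in> \<Omega> \<inter> ball x r \<longrightarrow> \<not> P \<rho> i y)"

context
  fixes \<rho> :: real
  assumes rho0: "0 \<le> \<rho>" and rho1: "\<rho> < 1"
    and Rge: "\<And>x t i. x \<in> cl \<Longrightarrow> t \<in> {0..T} \<Longrightarrow> \<rho> * V x t $ i \<le> U x t $ i"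
begin

lemma W_nn: "x \<in> cl \<Longrightarrow> t \<in> {0..T} \<Longrightarrow> 0 \<le> W \<rho> i x t"
  using Rge unfolding W_def by auto

lemma W_int: assumes "x \<in> cl" "t \<in> {0<..T}"
  shows "set_integrable lebesgue \<Omega> (\<lambda>y. J i x y * W \<rho> i y t)"
proof -
  have "(\<lambda>y. J i x y * W \<rho> i y t) = (\<lambda>y. J i x y * U y t $ i - \<rho> * (J i x y * V y t $ i))"
    by (auto simp: W_def algebra_simps)
  thus ?thesis using U_int[OF assms] V_int[OF assms] by auto
qed

lemma kW_eq: assumes "x \<in> cl" "t \<in> {0<..T}"
  shows "kW \<rho> i x t = kU i x t - \<rho> * kV i x t"
proof -
  have "(\<lambda>y. J i x y * W \<rho> i y t) = (\<lambda>y. J i x y * U y t $ i - \<rho> * (J i x y * V y t $ i))"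
    by (auto simp: W_def algebra_simps)
  thus ?thesis using U_int[OF assms] V_int[OF assms] unfolding kW_def kU_def kV_def
    by (simp add: set_integral_diff set_integral_mult_right)
qed

lemma W_der: assumes "x \<in> cl" "t \<in> {0<..T}"
  shows "((\<lambda>s. W \<rho> i x s) has_real_derivative W' \<rho> i x t) (at t within {0..T})"
proof -
  have "((\<lambda>s. U x s $ i - \<rho> * V x s $ i) has_real_derivative
     (d i * kU i x t - dstar i x * U x t $ i + f i x t (U x t)) -
       \<rho> * (d i * kV i x t - dstar i x * V x t $ i + f i x t (V x t))) (at t within {0..T})"
    by (intro DERIV_diff DERIV_cmult U_der[OF assms] V_der[OF assms])
  moreover have "(d i * kU i x t - dstar i x * U x t $ i + f i x t (U x t)) -
       \<rho> * (d i * kV i x t - dstar i x * V x t $ i + f i x t (V x t)) = W' \<rho> i x t"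
    unfolding W'_def kW_eq[OF assms] W_def by (simp add: algebra_simps)
  ultimately show ?thesis unfolding W_def by simp
qed

lemma W_cont: "x \<in> cl \<Longrightarrow> continuous_on {0..T} (W \<rho> i x)"
proof -
  assume x: "x \<in> cl"
  have "continuous_on {0..T} (\<lambda>t. U x t $ i - \<rho> * V x t $ i)"
    by (rule continuous_on_diff[OF U_cont[OF x] continuous_on_mult_left[OF V_cont[OF x]]])
  thus ?thesis unfolding W_def by (simp add: W_def[abs_def])
qed

lemma W_per: "x \<in> cl \<Longrightarrow> W \<rho> i x 0 = W \<rho> i x T"
  unfolding W_def using U_per V_per by auto

lemma mvt_f:
  assumes x: "x \<in> cl" and t: "t \<in> {0..T}"
  shows "\<exists>p\<in>Kset. (\<Sum>j\<in>A. f j x t (U x t) - f j x t (\<rho> *\<^sub>R V x t))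
     = (\<Sum>j\<in>A. \<Sum>k\<in>UNIV. Df j k x t p * W \<rho> k x t)"
proof -
  define u0 where "u0 = \<rho> *\<^sub>R V x t"
  define u1 where "u1 = U x t"
  define q where "q = (\<lambda>s::real. u0 + s *\<^sub>R (u1 - u0))"
  have qk: "q s $ k = \<rho> * V x t $ k + s * W \<rho> k x t" for s k
    unfolding q_def u0_def u1_def W_def by simp
  have q_in: "q s \<in> Kset" if s: "s \<in> {0..1}" for s
  proof -
    have "q s \<in> nonneg_orthant" unfolding nonneg_orthant_def
    proof (safe)
      fix k
      have "0 \<le> \<rho> * V x t $ k" using rho0 V_pos[OF x t, of k] by auto
      moreover have "0 \<le> s * W \<rho> k x t" using s W_nn[OF x t] by auto
      ultimately show "0 \<le> q s $ k" unfolding qk by simp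
    qed
    moreover have "norm (q s) \<le> Bd"
    proof -
      have "q s = (1 - s) *\<^sub>R u0 + s *\<^sub>R u1" unfolding q_def by (simp add: algebra_simps)
      hence "norm (q s) \<le> (1 - s) * norm u0 + s * norm u1"
        using s by (metis (no_types, lifting) abs_of_nonneg atLeastAtMost_iff diff_ge_0_iff_ge
            norm_scaleR norm_triangle_ineq)
      also have "\<dots> \<le> (1 - s) * Bd + s * Bd"
      proof (intro add_mono mult_left_mono)
        have "norm u0 = \<rho> * norm (V x t)" unfolding u0_def using rho0 by simp
        also have "\<dots> \<le> 1 * Bd" using rho0 rho1 Bd(3)[OF x t] norm_ge_zero
          by (intro mult_mono) auto
        finally show "norm u0 \<le> Bd" by simp
        show "norm u1 \<le> Bd" unfolding u1_def using Bd(2)[OF x t] .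
      qed (use s in auto)
      finally show ?thesis by (simp add: algebra_simps)
    qed
    ultimately show ?thesis unfolding Kset_def by auto
  qed
  define F where "F = (\<lambda>s. \<Sum>j\<in>A. f j x t (q s))"
  define F' where "F' = (\<lambda>s h. \<Sum>j\<in>A. \<Sum>k\<in>UNIV. Df j k x t (q s) * (h *\<^sub>R (u1 - u0)) $ k)"
  have "\<exists>\<xi>\<in>{0<..<1}. F 1 - F 0 = F' \<xi> (1 - 0)"
  proof (rule mvt_simple)
    fix s :: real assume s: "0 \<le> s" "s \<le> 1"
    have qd: "(q has_derivative (\<lambda>h. h *\<^sub>R (u1 - u0))) (at s within {0..1})"
      unfolding q_def by (auto intro!: derivative_eq_intros)
    have qsub: "q ` {0..1} \<subseteq> nonneg_orthant" using q_in unfolding Kset_def by auto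
    show "(F has_derivative F' s) (at s within {0..1})"
      unfolding F_def F'_def
    proof (rule has_derivative_sum)
      fix j assume "j \<in> A"
      show "((\<lambda>s. f j x t (q s)) has_derivative
          (\<lambda>h. \<Sum>k\<in>UNIV. Df j k x t (q s) * (h *\<^sub>R (u1 - u0)) $ k)) (at s within {0..1})"
        using has_derivative_in_compose2[of nonneg_orthant "f j x t"
            "\<lambda>u h. \<Sum>k\<in>UNIV. Df j k x t u * h $ k" q "{0..1}" s "\<lambda>h. h *\<^sub>R (u1 - u0)"]
          F1_deriv[OF x t] qsub s qd by auto
    qed
  qed simp
  then obtain \<xi> where \<xi>: "\<xi> \<in> {0<..<1}" "F 1 - F 0 = F' \<xi> (1 - 0)" by blast
  have "q 1 = U x t" "q 0 = \<rho> *\<^sub>R V x t" unfolding q_def u0_def u1_def by auto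
  hence "(\<Sum>j\<in>A. f j x t (U x t) - f j x t (\<rho> *\<^sub>R V x t)) = F 1 - F 0"
    unfolding F_def by (simp add: sum_subtractf)
  also have "\<dots> = (\<Sum>j\<in>A. \<Sum>k\<in>UNIV. Df j k x t (q \<xi>) * W \<rho> k x t)"
    unfolding \<xi>(2) F'_def by (simp add: u0_def u1_def W_def)
  finally show ?thesis using q_in[of \<xi>] \<xi>(1) by auto
qed


lemma fdiff_lower:
  assumes x: "x \<in> cl" and t: "t \<in> {0..T}"
  shows "f i x t (U x t) - f i x t (\<rho> *\<^sub>R V x t) + Ld * W \<rho> i x t \<ge> 0"
proof -
  obtain p where p: "p \<in> Kset" and eq: "(\<Sum>j\<in>{i}. f j x t (U x t) - f j x t (\<rho> *\<^sub>R V x t))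
     = (\<Sum>j\<in>{i}. \<Sum>k\<in>UNIV. Df j k x t p * W \<rho> k x t)"
    using mvt_f[OF x t, of "{i}"] by blast
  have po: "p \<in> nonneg_orthant" using p unfolding Kset_def by auto
  have "(\<Sum>k\<in>UNIV. Df i k x t p * W \<rho> k x t) = Df i i x t p * W \<rho> i x t
      + (\<Sum>k\<in>UNIV - {i}. Df i k x t p * W \<rho> k x t)"
    by (subst sum.remove[of UNIV i]) auto
  also have "\<dots> \<ge> Df i i x t p * W \<rho> i x t"
    using F1_coop[OF x t po] W_nn[OF x t] by (auto intro!: sum_nonneg mult_nonneg_nonneg)
  finally have 1: "(\<Sum>k\<in>UNIV. Df i k x t p * W \<rho> k x t) \<ge> Df i i x t p * W \<rho> i x t" .
  have "Df i i x t p \<ge> - Ld" using Ld(2)[OF x t p, of i i] by auto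
  hence "Df i i x t p * W \<rho> i x t \<ge> - Ld * W \<rho> i x t"
    using W_nn[OF x t, of i] by (intro mult_right_mono) auto
  with 1 eq show ?thesis by simp
qed

lemma F3part:
  assumes x: "x \<in> cl" and t: "t \<in> {0..T}"
  shows "f i x t (\<rho> *\<^sub>R V x t) - \<rho> * f i x t (V x t) \<ge> 0"
proof (cases "\<rho> = 0")
  case True thus ?thesis using F1_zero by simp
next
  case False
  hence "vgt (\<chi> i. f i x t (\<rho> *\<^sub>R V x t)) (\<rho> *\<^sub>R (\<chi> i. f i x t (V x t)))"
    using rho0 rho1 x t V_bp unfolding bounded_positive_def by (intro F3) auto
  thus ?thesis unfolding vgt_def vge_def by auto
qed

lemma kW_nn: assumes "x \<in> cl" "t \<in> {0<..T}" shows "kW \<rho> i x t \<ge> 0"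
  unfolding kW_def set_lebesgue_integral_def
  using J_nonneg W_nn Om_cl assms
  by (intro integral_nonneg_AE AE_I2) (auto simp: indicator_def intro!: mult_nonneg_nonneg)

lemma hW_eq: "hW \<rho> i x t = d i * kW \<rho> i x t + (Cc - dstar i x - Ld) * W \<rho> i x t
   + (f i x t (U x t) - f i x t (\<rho> *\<^sub>R V x t) + Ld * W \<rho> i x t)
   + (f i x t (\<rho> *\<^sub>R V x t) - \<rho> * f i x t (V x t))"
  unfolding hW_def W'_def by (simp add: algebra_simps)

lemma hW_ge:
  assumes x: "x \<in> cl" and t: "t \<in> {0<..T}"
  shows "hW \<rho> i x t \<ge> d i * kW \<rho> i x t"
    and "hW \<rho> i x t \<ge> f i x t (U x t) - f i x t (\<rho> *\<^sub>R V x t) + Ld * W \<rho> i x t"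
    and "hW \<rho> i x t \<ge> f i x t (\<rho> *\<^sub>R V x t) - \<rho> * f i x t (V x t)"
    and "hW \<rho> i x t \<ge> 0"
proof -
  have t': "t \<in> {0..T}" using t by auto
  have a: "d i * kW \<rho> i x t \<ge> 0" using d_pos[of i] kW_nn[OF x t] by auto
  have b: "(Cc - dstar i x - Ld) * W \<rho> i x t \<ge> 0" using Cc(2)[OF x, of i] W_nn[OF x t'] by auto
  note c = fdiff_lower[OF x t', of i] and e = F3part[OF x t', of i]
  show "hW \<rho> i x t \<ge> d i * kW \<rho> i x t"
    and "hW \<rho> i x t \<ge> f i x t (U x t) - f i x t (\<rho> *\<^sub>R V x t) + Ld * W \<rho> i x t"
    and "hW \<rho> i x t \<ge> f i x t (\<rho> *\<^sub>R V x t) - \<rho> * f i x t (V x t)"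
    and "hW \<rho> i x t \<ge> 0"
    unfolding hW_eq using a b c e by linarith+
qed

lemma ode_inst: assumes x: "x \<in> cl" shows "ode T Cc (W \<rho> i x) (W' \<rho> i x)"
proof
  show "0 < T" by (rule T_pos)
  show "0 < Cc" by (rule Cc(1))
  show "continuous_on {0..T} (W \<rho> i x)" by (rule W_cont[OF x])
  show "(W \<rho> i x has_real_derivative W' \<rho> i x t) (at t within {0..T})" if "t \<in> {0<..T}" for t
    using W_der[OF x that] by simp
  show "W \<rho> i x 0 = W \<rho> i x T" by (rule W_per[OF x])
  show "0 \<le> W \<rho> i x t" if "t \<in> {0..T}" for t using W_nn[OF x that] .
  show "0 \<le> W' \<rho> i x t + Cc * W \<rho> i x t" if "t \<in> {0<..T}" for t
    using hW_ge(4)[OF x that] unfolding hW_def .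
qed

lemma P_if_pos: assumes x: "x \<in> cl" and t1: "t1 \<in> {0<..T}" and h: "hW \<rho> i x t1 > 0"
  shows "P \<rho> i x"
  unfolding P_def using ode.pos[OF ode_inst[OF x], of t1] t1 h unfolding hW_def by auto

lemma kW_zero: assumes x: "x \<in> cl" and nP: "\<not> P \<rho> i x" and t: "t \<in> {0<..T}"
  shows "kW \<rho> i x t = 0"
proof -
  have "hW \<rho> i x t \<le> 0" using P_if_pos[OF x t] nP by force
  thus ?thesis using hW_ge(1)[OF x t] kW_nn[OF x t] d_pos[of i]
    by (smt (verit) mult_pos_pos)
qed

end
end


context uniq begin

context
  fixes \<rho> :: real
  assumes rho0: "0 \<le> \<rho>" and rho1: "\<rho> < 1"
    and Rge: "\<And>x t i. x \<in> cl \<Longrightarrow> t \<in> {0..T} \<Longrightarrow> \<rho> * V x t $ i \<le> U x t $ i"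
begin

lemmas facts = W_nn[OF rho0 rho1 Rge] W_int[OF rho0 rho1 Rge] kW_nn[OF rho0 rho1 Rge]
  hW_ge[OF rho0 rho1 Rge] ode_inst[OF rho0 rho1 Rge] P_if_pos[OF rho0 rho1 Rge]
  kW_zero[OF rho0 rho1 Rge] mvt_f[OF rho0 rho1 Rge] F3part[OF rho0 rho1 Rge]

lemma W_nn': "x \<in> cl \<Longrightarrow> t \<in> {0..T} \<Longrightarrow> 0 \<le> W \<rho> i x t"
  using W_nn[OF rho0 rho1 Rge] by blast

lemma kpos:
  assumes x: "x \<in> cl" and r: "r > 0" and Jp: "\<And>y. y \<in> ball z r \<Longrightarrow> J i x y > 0"
    and nn: "\<not> (AE y in lebesgue. y \<in> \<Omega> \<inter> ball z r \<longrightarrow> \<not> P \<rho> i y)"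
    and t: "t \<in> {0<..T}"
  shows "kW \<rho> i x t > 0"
proof (rule ccontr)
  assume "\<not> kW \<rho> i x t > 0"
  hence k0: "kW \<rho> i x t = 0" using kW_nn[OF rho0 rho1 Rge x t, of i] by linarith
  define g where "g = (\<lambda>y. indicator \<Omega> y *\<^sub>R (J i x y * W \<rho> i y t))"
  have gi: "integrable lebesgue g" using W_int[OF rho0 rho1 Rge x t] unfolding g_def set_integrable_def .
  have gnn: "AE y in lebesgue. 0 \<le> g y"
    using J_nonneg W_nn'[of _ t i] Om_cl t unfolding g_def
    by (intro AE_I2) (auto simp: indicator_def intro!: mult_nonneg_nonneg)
  have "integral\<^sup>L lebesgue g = 0" using k0 unfolding kW_def set_lebesgue_integral_def g_def .
  hence "AE y in lebesgue. g y = 0" using integral_nonneg_eq_0_iff_AE[OF gi gnn] by simp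
  hence "AE y in lebesgue. y \<in> \<Omega> \<inter> ball z r \<longrightarrow> \<not> P \<rho> i y"
  proof (rule eventually_mono)
    fix y assume gy: "g y = 0"
    show "y \<in> \<Omega> \<inter> ball z r \<longrightarrow> \<not> P \<rho> i y"
    proof
      assume y: "y \<in> \<Omega> \<inter> ball z r"
      hence "J i x y > 0" using Jp by auto
      hence "W \<rho> i y t = 0" using gy y unfolding g_def by auto
      moreover have "t \<in> {0..T}" using t by auto
      ultimately show "\<not> P \<rho> i y" unfolding P_def by fastforce
    qed
  qed
  with nn show False by blast
qed

lemma W_bound: "y \<in> cl \<Longrightarrow> t \<in> {0..T} \<Longrightarrow> \<bar>W \<rho> i y t\<bar> \<le> 2 * Bd"
proof -
  assume y: "y \<in> cl" and t: "t \<in> {0..T}"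
  have "\<bar>U y t $ i\<bar> \<le> Bd" using Bd(2)[OF y t] component_le_norm_cart[of "U y t" i] by linarith
  moreover have "\<bar>V y t $ i\<bar> \<le> Bd" using Bd(3)[OF y t] component_le_norm_cart[of "V y t" i] by linarith
  moreover have "\<bar>\<rho> * V y t $ i\<bar> \<le> \<bar>V y t $ i\<bar>" using rho0 rho1 by (auto simp: abs_mult intro: mult_left_le_one_le)
  ultimately show ?thesis unfolding W_def by linarith
qed

lemma kT_cont: "continuous_on cl (\<lambda>x. kW \<rho> i x T)"
  unfolding kW_def
  by (rule k_cont[where M = "2 * Bd"]) (use W_bound Om_cl T_pos W_int[OF rho0 rho1 Rge] in auto)

lemma locnull_open: "open {x. locnull \<rho> i x}"
  unfolding open_contains_ball
proof safe
  fix x assume "locnull \<rho> i x"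
  then obtain r where r: "r > 0" "AE y in lebesgue. y \<in> \<Omega> \<inter> ball x r \<longrightarrow> \<not> P \<rho> i y"
    unfolding locnull_def by auto
  show "\<exists>e>0. ball x e \<subseteq> {x. locnull \<rho> i x}"
  proof (intro exI conjI subsetI)
    fix x' assume x': "x' \<in> ball x r"
    have "AE y in lebesgue. y \<in> \<Omega> \<inter> ball x' (r - dist x x') \<longrightarrow> \<not> P \<rho> i y"
    proof (rule eventually_mono[OF r(2)])
      fix y assume h: "y \<in> \<Omega> \<inter> ball x r \<longrightarrow> \<not> P \<rho> i y"
      show "y \<in> \<Omega> \<inter> ball x' (r - dist x x') \<longrightarrow> \<not> P \<rho> i y"
      proof
        assume y: "y \<in> \<Omega> \<inter> ball x' (r - dist x x')"
        have "dist x y \<le> dist x x' + dist x' y" by (rule dist_triangle)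
        hence "y \<in> \<Omega> \<inter> ball x r" using y by auto
        thus "\<not> P \<rho> i y" using h by auto
      qed
    qed
    moreover have "r - dist x x' > 0" using x' by auto
    ultimately show "x' \<in> {x. locnull \<rho> i x}" unfolding locnull_def by blast
  qed (use r in auto)
qed

lemma nlocnull_open: "open {x \<in> \<Omega>. \<not> locnull \<rho> i x}"
  unfolding open_contains_ball
proof safe
  fix x assume x: "x \<in> \<Omega>" and nl: "\<not> locnull \<rho> i x"
  have xc: "x \<in> cl" using x Om_cl by auto
  obtain r0 where r0: "r0 > 0" "\<And>y. y \<in> ball x r0 \<Longrightarrow> J i x y > 0" using J_pos_ball by blast
  have "kW \<rho> i x T > 0"
    by (rule kpos[OF xc r0]) (use nl r0 T_pos in \<open>auto simp: locnull_def\<close>)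
  then obtain dl where dl: "dl > 0" "\<And>x'. x' \<in> cl \<Longrightarrow> dist x' x < dl \<Longrightarrow> dist (kW \<rho> i x' T) (kW \<rho> i x T) < kW \<rho> i x T"
    using kT_cont xc unfolding continuous_on_iff by metis
  obtain d2 where d2: "d2 > 0" "ball x d2 \<subseteq> \<Omega>" using dom(1) x open_contains_ball by blast
  define e where "e = min dl d2"
  have Pnear: "P \<rho> i x'" if "x' \<in> ball x e" for x'
  proof -
    have x'o: "x' \<in> \<Omega>" using that d2 unfolding e_def by auto
    hence x'c: "x' \<in> cl" using Om_cl by auto
    have "dist x' x < dl" using that unfolding e_def by (auto simp: dist_commute)
    hence "kW \<rho> i x' T > 0" using dl(2)[OF x'c] by (auto simp: dist_real_def)
    thus ?thesis using kW_zero[OF rho0 rho1 Rge x'c, of i T] T_pos by force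
  qed
  show "\<exists>e>0. ball x e \<subseteq> {x \<in> \<Omega>. \<not> locnull \<rho> i x}"
  proof (intro exI[of _ e] conjI subsetI CollectI)
    show "e > 0" unfolding e_def using dl d2 by auto
    fix x' assume x': "x' \<in> ball x e"
    show "x' \<in> \<Omega>" using x' d2 unfolding e_def by auto
    show "\<not> locnull \<rho> i x'"
    proof
      assume "locnull \<rho> i x'"
      then obtain r where r: "r > 0" "AE y in lebesgue. y \<in> \<Omega> \<inter> ball x' r \<longrightarrow> \<not> P \<rho> i y"
        unfolding locnull_def by auto
      have "AE y in lebesgue. y \<in> ball x' r \<inter> ball x e \<longrightarrow> False"
        using r(2) by (rule eventually_mono) (use Pnear d2 in \<open>auto simp: e_def\<close>)
      moreover have "x' \<in> ball x' r \<inter> ball x e" using x' r by auto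
      ultimately show False using open_not_null[of "ball x' r \<inter> ball x e"] by blast
    qed
  qed
qed

lemma dichotomy: "(\<forall>x\<in>\<Omega>. locnull \<rho> i x) \<or> (\<forall>x\<in>\<Omega>. \<not> locnull \<rho> i x)"
  using connectedD[OF dom(2) locnull_open[of i] nlocnull_open[of i]] by auto

end
end


context uniq begin

context
  fixes \<rho> :: real
  assumes rho0: "0 \<le> \<rho>" and rho1: "\<rho> < 1"
    and Rge: "\<And>x t i. x \<in> cl \<Longrightarrow> t \<in> {0..T} \<Longrightarrow> \<rho> * V x t $ i \<le> U x t $ i"
begin

lemma unif:
  assumes nl: "\<forall>x\<in>\<Omega>. \<not> locnull \<rho> i x"
  shows "\<exists>\<delta>>0. \<forall>x\<in>cl. \<forall>t\<in>{0..T}. W \<rho> i x t \<ge> \<delta>"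
proof -
  have kpos_cl: "kW \<rho> i x T > 0" if x: "x \<in> cl" for x
  proof -
    obtain r0 where r0: "r0 > 0" "\<And>y. y \<in> ball x r0 \<Longrightarrow> J i x y > 0" using J_pos_ball by blast
    obtain z where z: "z \<in> \<Omega>" "dist z x < r0 / 2" using x r0(1) closure_approachable[of x \<Omega>]
      by (metis half_gt_zero)
    have sub: "y \<in> ball x r0" if "y \<in> ball z (r0/2)" for y
    proof -
      have "dist x y \<le> dist x z + dist z y" by (rule dist_triangle)
      thus ?thesis using that z by (auto simp: dist_commute)
    qed
    have nn: "\<not> (AE y in lebesgue. y \<in> \<Omega> \<inter> ball z (r0/2) \<longrightarrow> \<not> P \<rho> i y)"
      using nl z(1) r0(1) unfolding locnull_def by (meson half_gt_zero)
    have Jp: "\<And>y. y \<in> ball z (r0/2) \<Longrightarrow> J i x y > 0" using sub r0(2) by blast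
    have TT: "T \<in> {0<..T}" using T_pos by auto
    show ?thesis using kpos[OF rho0 rho1 Rge x half_gt_zero[OF r0(1)] Jp nn TT] .
  qed
  obtain xm where xm: "xm \<in> cl" "\<And>x. x \<in> cl \<Longrightarrow> kW \<rho> i xm T \<le> kW \<rho> i x T"
    using continuous_attains_inf[OF cl_compact cl_ne kT_cont[OF rho0 rho1 Rge, of i]] by auto
  define c where "c = kW \<rho> i xm T"
  have c0: "c > 0" unfolding c_def using kpos_cl[OF xm(1)] .
  define E where "E = exp (- Cc * T)"
  have E0: "E > 0" unfolding E_def by auto
  have klow: "kW \<rho> i x t \<ge> E * c" if x: "x \<in> cl" and t: "t \<in> {0<..T}" for x t
  proof -
    have TT: "T \<in> {0<..T}" using T_pos by auto
    have feq: "(\<lambda>y. J i x y * (E * W \<rho> i y T)) = (\<lambda>y. E * (J i x y * W \<rho> i y T))"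
      by (rule ext) (simp only: mult.left_commute)
    have "E * kW \<rho> i x T = (LINT y:\<Omega>|lebesgue. J i x y * (E * W \<rho> i y T))"
      unfolding kW_def feq by (rule set_integral_mult_right[symmetric])
    also have "\<dots> \<le> kW \<rho> i x t"
      unfolding kW_def
    proof (rule set_integral_mono)
      show "set_integrable lebesgue \<Omega> (\<lambda>y. J i x y * (E * W \<rho> i y T))"
        unfolding feq by (rule set_integrable_mult_right[OF W_int[OF rho0 rho1 Rge x TT]])
      show "set_integrable lebesgue \<Omega> (\<lambda>y. J i x y * W \<rho> i y t)"
        using W_int[OF rho0 rho1 Rge x t] .
      fix y assume y: "y \<in> \<Omega>"
      hence yc: "y \<in> cl" using Om_cl by auto
      have "E * W \<rho> i y T \<le> W \<rho> i y t" unfolding E_def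
        using ode.decay[OF ode_inst[OF rho0 rho1 Rge yc, of i], of t] t by auto
      thus "J i x y * (E * W \<rho> i y T) \<le> J i x y * W \<rho> i y t"
        using J_nonneg by (intro mult_left_mono) auto
    qed
    finally have "E * kW \<rho> i x T \<le> kW \<rho> i x t" .
    moreover have "E * c \<le> E * kW \<rho> i x T" using xm(2)[OF x] E0 unfolding c_def by auto
    ultimately show ?thesis by linarith
  qed
  define a where "a = d i * (E * c)"
  have a0: "a > 0" unfolding a_def using d_pos[of i] E0 c0 by auto
  define \<delta> where "\<delta> = exp (- Cc * T) * (a * T / (exp (Cc * T) - 1))"
  have "exp (Cc * T) > 1" using T_pos Cc(1) by auto
  hence "\<delta> > 0" unfolding \<delta>_def using a0 T_pos by (intro mult_pos_pos divide_pos_pos) auto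
  moreover have "W \<rho> i x t \<ge> \<delta>" if x: "x \<in> cl" and t: "t \<in> {0..T}" for x t
    unfolding \<delta>_def
  proof (rule ode.lower[OF ode_inst[OF rho0 rho1 Rge x, of i] a0 _ t])
    fix s assume s: "s \<in> {0<..T}"
    have "a \<le> d i * kW \<rho> i x s" unfolding a_def using klow[OF x s] d_pos[of i]
      by (intro mult_left_mono) auto
    also have "\<dots> \<le> hW \<rho> i x s" using hW_ge(1)[OF rho0 rho1 Rge x s] .
    finally show "a \<le> W' \<rho> i x s + Cc * W \<rho> i x s" unfolding hW_def .
  qed
  ultimately show ?thesis by blast
qed

end
end


context uniq begin

context
  fixes \<rho> :: real
  assumes rho0: "0 \<le> \<rho>" and rho1: "\<rho> < 1"
    and Rge: "\<And>x t i. x \<in> cl \<Longrightarrow> t \<in> {0..T} \<Longrightarrow> \<rho> * V x t $ i \<le> U x t $ i"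
begin

lemma no_open:
  assumes nI: "\<And>j. j \<in> A \<Longrightarrow> \<forall>x\<in>\<Omega>. locnull \<rho> j x"
    and G: "open G" "G \<noteq> {}" "G \<subseteq> \<Omega>" and cov: "\<And>x. x \<in> G \<Longrightarrow> \<exists>j\<in>A. P \<rho> j x"
  shows False
proof -
  obtain x where x: "x \<in> G" using G by auto
  have "\<exists>r>0. \<forall>j\<in>A. AE y in lebesgue. y \<in> \<Omega> \<inter> ball x r \<longrightarrow> \<not> P \<rho> j y"
  proof (rule finite_min_pos)
    fix j assume "j \<in> A"
    thus "\<exists>r>0. AE y in lebesgue. y \<in> \<Omega> \<inter> ball x r \<longrightarrow> \<not> P \<rho> j y"
      using nI x G(3) unfolding locnull_def by auto
  next
    fix j r r' assume h: "AE y in lebesgue. y \<in> \<Omega> \<inter> ball x r \<longrightarrow> \<not> P \<rho> j y" "0 < r'" "r' \<le> r"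
    from h(1) show "AE y in lebesgue. y \<in> \<Omega> \<inter> ball x r' \<longrightarrow> \<not> P \<rho> j y"
      by (rule eventually_mono) (use h(3) in auto)
  qed simp
  then obtain r where r: "r > 0" "\<forall>j\<in>A. AE y in lebesgue. y \<in> \<Omega> \<inter> ball x r \<longrightarrow> \<not> P \<rho> j y"
    by blast
  obtain e where e: "e > 0" "ball x e \<subseteq> G" using G(1) x open_contains_ball by blast
  have "AE y in lebesgue. \<forall>j\<in>A. y \<in> \<Omega> \<inter> ball x r \<longrightarrow> \<not> P \<rho> j y"
    using r(2) by (intro eventually_ball_finite) auto
  hence "AE y in lebesgue. y \<in> ball x (min r e) \<longrightarrow> False"
  proof (rule eventually_mono)
    fix y assume h: "\<forall>j\<in>A. y \<in> \<Omega> \<inter> ball x r \<longrightarrow> \<not> P \<rho> j y"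
    show "y \<in> ball x (min r e) \<longrightarrow> False"
    proof
      assume y: "y \<in> ball x (min r e)"
      hence "y \<in> G" using e by auto
      then obtain j where "j \<in> A" "P \<rho> j y" using cov by blast
      moreover have "y \<in> \<Omega> \<inter> ball x r" using y \<open>y \<in> G\<close> G(3) by auto
      ultimately show False using h by blast
    qed
  qed
  moreover have "x \<in> ball x (min r e)" using r e by auto
  ultimately show False using open_not_null[of "ball x (min r e)"] by blast
qed

end
end


context uniq begin

context
  fixes \<rho> :: real
  assumes rho0: "0 \<le> \<rho>" and rho1: "\<rho> < 1"
    and Rge: "\<And>x t i. x \<in> cl \<Longrightarrow> t \<in> {0..T} \<Longrightarrow> \<rho> * V x t $ i \<le> U x t $ i"
begin

lemma step: "\<exists>\<epsilon>>0. \<forall>x\<in>cl. \<forall>t\<in>{0..T}. \<forall>i. (\<rho> + \<epsilon>) * V x t $ i \<le> U x t $ i"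
proof -
  define I where "I = {i. \<forall>x\<in>\<Omega>. \<not> locnull \<rho> i x}"
  have notI: "\<forall>x\<in>\<Omega>. locnull \<rho> j x" if "j \<in> - I" for j
    using dichotomy[OF rho0 rho1 Rge, of j] that unfolding I_def by auto
  have "\<exists>\<delta>>0. \<forall>i\<in>I. \<forall>x\<in>cl. \<forall>t\<in>{0..T}. W \<rho> i x t \<ge> \<delta>"
  proof (rule finite_min_pos)
    fix i assume "i \<in> I"
    thus "\<exists>\<delta>>0. \<forall>x\<in>cl. \<forall>t\<in>{0..T}. W \<rho> i x t \<ge> \<delta>"
      using unif[OF rho0 rho1 Rge] unfolding I_def by auto
  qed force+
  then obtain \<delta> where \<delta>: "\<delta> > 0" "\<And>i x t. i \<in> I \<Longrightarrow> x \<in> cl \<Longrightarrow> t \<in> {0..T} \<Longrightarrow> W \<rho> i x t \<ge> \<delta>"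
    by blast
  show ?thesis
  proof (cases "I = UNIV")
    case True
    show ?thesis
    proof (intro exI[of _ "\<delta> / Bd"] conjI ballI allI)
      show "\<delta> / Bd > 0" using \<delta>(1) Bd(1) by auto
      fix x t i assume x: "x \<in> cl" and t: "t \<in> {0..T}"
      have "V x t $ i \<le> Bd" using Bd(3)[OF x t] component_le_norm_cart[of "V x t" i] by linarith
      hence "\<delta> / Bd * V x t $ i \<le> \<delta> / Bd * Bd"
        using \<delta>(1) Bd(1) by (intro mult_left_mono) auto
      also have "\<dots> = \<delta>" using Bd(1) by simp
      also have "\<dots> \<le> W \<rho> i x t" using \<delta>(2)[OF _ x t, of i] True by auto
      finally show "(\<rho> + \<delta> / Bd) * V x t $ i \<le> U x t $ i"
        unfolding W_def by (simp add: algebra_simps)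
    qed
  next
    case False
    have False
    proof (cases "I = {}")
      case True
      show False
      proof (rule no_open[OF rho0 rho1 Rge notI dom(1,4) order.refl])
        fix x assume x: "x \<in> \<Omega>"
        hence xc: "x \<in> cl" using Om_cl by auto
        show "\<exists>j\<in>- I. P \<rho> j x"
        proof (cases "\<rho> = 0")
          case True
          have "P \<rho> j x" for j
            unfolding P_def W_def using True U_pos[OF xc] by auto
          thus ?thesis using \<open>I = {}\<close> by auto
        next
          case False
          have TT: "T \<in> {0..T}" "T \<in> {0<..T}" using T_pos by auto
          have "vgt (\<chi> i. f i x T (\<rho> *\<^sub>R V x T)) (\<rho> *\<^sub>R (\<chi> i. f i x T (V x T)))"
            using rho0 rho1 False xc TT V_bp unfolding bounded_positive_def by (intro F3) auto
          then obtain j where "f j x T (\<rho> *\<^sub>R V x T) \<noteq> \<rho> * f j x T (V x T)"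
            "\<rho> * f j x T (V x T) \<le> f j x T (\<rho> *\<^sub>R V x T)"
            unfolding vgt_def vge_def by (auto simp: vec_eq_iff)
          hence "f j x T (\<rho> *\<^sub>R V x T) - \<rho> * f j x T (V x T) > 0" by auto
          hence "hW \<rho> j x T > 0" using hW_ge(3)[OF rho0 rho1 Rge xc TT(2), of j] by linarith
          hence "P \<rho> j x" using P_if_pos[OF rho0 rho1 Rge xc TT(2)] by blast
          thus ?thesis using \<open>I = {}\<close> by auto
        qed
      qed
    next
      case Ine: False
      obtain x0 t0 where x0: "x0 \<in> cl" and t0: "t0 \<in> {0..T}"
        and irr: "\<And>u. u \<in> nonneg_orthant \<Longrightarrow> irreducible_matrix (\<lambda>i k. Df i k x0 t0 u)"
        using F2 by blast
      define \<Phi> where "\<Phi> = (\<lambda>(x,t,u). \<Sum>j\<in>-I. \<Sum>k\<in>I. Df j k x t u)"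
      have \<Phi>_cont: "continuous_on (cl \<times> {0..T} \<times> Kset) \<Phi>"
      proof -
        have "continuous_on (cl \<times> {0..T} \<times> Kset) (\<lambda>p. \<Sum>j\<in>-I. \<Sum>k\<in>I. (\<lambda>(x,t,u). Df j k x t u) p)"
          using continuous_on_subset[OF F1_Dcont Kc_sub] by (intro continuous_intros) auto
        thus ?thesis unfolding \<Phi>_def by (simp add: case_prod_beta)
      qed
      have \<Phi>_pos: "\<Phi> (x0, t0, u) > 0" if u: "u \<in> Kset" for u
      proof -
        have uo: "u \<in> nonneg_orthant" using u unfolding Kset_def by auto
        have "- I \<noteq> {}" "- I \<noteq> UNIV" using False Ine by auto
        note ne = this
        have h: "\<not> (- I \<noteq> {} \<and> - I \<noteq> UNIV \<and> (\<forall>i\<in>- I. \<forall>j. j \<notin> - I \<longrightarrow> Df i j x0 t0 u = 0))"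
          using irr[OF uo] unfolding irreducible_matrix_def by (rule contrapos_nn) (rule exI)
        hence "\<exists>j\<in>- I. \<exists>k. k \<notin> - I \<and> Df j k x0 t0 u \<noteq> 0" using ne by simp
        then obtain j k where jk: "j \<in> - I" "k \<notin> - I" "Df j k x0 t0 u \<noteq> 0"
          by blast
        have nn: "Df j' k' x0 t0 u \<ge> 0" if "j' \<in> - I" "k' \<in> I" for j' k'
        proof -
          have "k' \<noteq> j'" using that by auto
          thus ?thesis using F1_coop[OF x0 t0 uo] by blast
        qed
        have "Df j k x0 t0 u \<le> (\<Sum>k\<in>I. Df j k x0 t0 u)"
          using jk nn by (intro member_le_sum) auto
        also have "\<dots> \<le> (\<Sum>j\<in>-I. \<Sum>k\<in>I. Df j k x0 t0 u)"
          using jk nn by (intro member_le_sum[where f = "\<lambda>j. \<Sum>k\<in>I. Df j k x0 t0 u"] sum_nonneg) auto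
        finally show ?thesis unfolding \<Phi>_def using jk nn[of j k] by auto
      qed
      have "continuous_on Kset (\<lambda>u. \<Phi> (x0, t0, u))"
        using x0 t0 by (intro continuous_on_compose2[OF \<Phi>_cont] continuous_intros) auto
      then obtain um where um: "um \<in> Kset" "\<And>u. u \<in> Kset \<Longrightarrow> \<Phi> (x0, t0, um) \<le> \<Phi> (x0, t0, u)"
        using continuous_attains_inf[OF Kset_compact] zero_Kset by blast
      define c0 where "c0 = \<Phi> (x0, t0, um)"
      have c0: "c0 > 0" unfolding c0_def using \<Phi>_pos[OF um(1)] .
      have "uniformly_continuous_on (cl \<times> {0..T} \<times> Kset) \<Phi>"
        by (rule compact_uniformly_continuous[OF \<Phi>_cont Kc_compact])
      then obtain \<eta> where \<eta>: "\<eta> > 0" "\<And>p p'. p \<in> cl \<times> {0..T} \<times> Kset \<Longrightarrow> p' \<in> cl \<times> {0..T} \<times> Kset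
          \<Longrightarrow> dist p' p < \<eta> \<Longrightarrow> dist (\<Phi> p') (\<Phi> p) < c0 / 2"
        unfolding uniformly_continuous_on_def using c0 by (metis half_gt_zero)
      define t1 where "t1 = (if t0 > 0 then t0 else min T (\<eta> / 2))"
      have t1: "t1 \<in> {0<..T}" "\<bar>t1 - t0\<bar> \<le> \<eta> / 2"
        using t0 T_pos \<eta>(1) unfolding t1_def by auto
      have t1': "t1 \<in> {0..T}" using t1 by auto
      show False
      proof (rule no_open[OF rho0 rho1 Rge notI])
        show "open (\<Omega> \<inter> ball x0 (\<eta>/2))" using dom(1) by auto
        show "\<Omega> \<inter> ball x0 (\<eta>/2) \<noteq> {}"
        proof -
          obtain y where "y \<in> \<Omega>" "dist y x0 < \<eta>/2"
            using x0 \<eta>(1) closure_approachable[of x0 \<Omega>] half_gt_zero by blast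
          thus ?thesis by (auto simp: dist_commute)
        qed
        show "\<Omega> \<inter> ball x0 (\<eta>/2) \<subseteq> \<Omega>" by auto
        fix x assume xG: "x \<in> \<Omega> \<inter> ball x0 (\<eta>/2)"
        hence xc: "x \<in> cl" using Om_cl by auto
        obtain p where p: "p \<in> Kset" and eq: "(\<Sum>j\<in>-I. f j x t1 (U x t1) - f j x t1 (\<rho> *\<^sub>R V x t1))
            = (\<Sum>j\<in>-I. \<Sum>k\<in>UNIV. Df j k x t1 p * W \<rho> k x t1)"
          using mvt_f[OF rho0 rho1 Rge xc t1'] by blast
        have po: "p \<in> nonneg_orthant" using p unfolding Kset_def by auto
        have d2: "dist (t1, p) (t0, p) = dist t1 t0" by (simp add: dist_Pair_Pair)
        have "dist (x, t1, p) (x0, t0, p) = sqrt ((dist x x0)\<^sup>2 + (dist t1 t0)\<^sup>2)"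
          unfolding dist_Pair_Pair[of x "(t1,p)"] d2 ..
        also have "\<dots> \<le> dist x x0 + dist t1 t0" by (intro sqrt_sum_squares_le_sum zero_le_dist)
        finally have "dist (x, t1, p) (x0, t0, p) \<le> dist x x0 + dist t1 t0" .
        also have "\<dots> < \<eta>" using xG t1(2) by (auto simp: dist_real_def dist_commute)
        finally have "dist (\<Phi> (x, t1, p)) (\<Phi> (x0, t0, p)) < c0 / 2"
          using \<eta>(2)[of "(x0, t0, p)" "(x, t1, p)"] x0 t0 xc t1' p by auto
        moreover have "\<Phi> (x0, t0, p) \<ge> c0" unfolding c0_def using um(2)[OF p] .
        ultimately have \<Phi>x: "\<Phi> (x, t1, p) \<ge> c0 / 2" unfolding dist_real_def abs_less_iff by linarith
        have rowlow: "(\<Sum>k\<in>UNIV. Df j k x t1 p * W \<rho> k x t1) \<ge>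
            - Ld * W \<rho> j x t1 + \<delta> * (\<Sum>k\<in>I. Df j k x t1 p)" if j: "j \<in> - I" for j
        proof -
          have "(\<Sum>k\<in>UNIV. Df j k x t1 p * W \<rho> k x t1) = Df j j x t1 p * W \<rho> j x t1
              + (\<Sum>k\<in>UNIV - {j}. Df j k x t1 p * W \<rho> k x t1)"
            by (subst sum.remove[of UNIV j]) auto
          also have "(\<Sum>k\<in>UNIV - {j}. Df j k x t1 p * W \<rho> k x t1) \<ge> (\<Sum>k\<in>I. Df j k x t1 p * W \<rho> k x t1)"
            using j F1_coop[OF xc t1' po] W_nn'[OF rho0 rho1 Rge xc t1']
            by (intro sum_mono2) (auto intro!: mult_nonneg_nonneg)
          moreover have "(\<Sum>k\<in>I. Df j k x t1 p * W \<rho> k x t1) \<ge> (\<Sum>k\<in>I. Df j k x t1 p * \<delta>)"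
          proof (intro sum_mono mult_left_mono)
            fix k assume k: "k \<in> I"
            show "W \<rho> k x t1 \<ge> \<delta>" using \<delta>(2)[OF k xc t1'] .
            have "k \<noteq> j" using k j by auto
            thus "0 \<le> Df j k x t1 p" using F1_coop[OF xc t1' po] by blast
          qed
          moreover have "(\<Sum>k\<in>I. Df j k x t1 p * \<delta>) = \<delta> * (\<Sum>k\<in>I. Df j k x t1 p)"
            by (simp add: sum_distrib_left mult.commute)
          moreover have "Df j j x t1 p * W \<rho> j x t1 \<ge> - Ld * W \<rho> j x t1"
            using Ld(2)[OF xc t1' p, of j j] W_nn'[OF rho0 rho1 Rge xc t1', of j]
            by (intro mult_right_mono) auto
          ultimately show ?thesis by linarith
        qed
        have "(\<Sum>j\<in>-I. f j x t1 (U x t1) - f j x t1 (\<rho> *\<^sub>R V x t1) + Ld * W \<rho> j x t1)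
            = (\<Sum>j\<in>-I. \<Sum>k\<in>UNIV. Df j k x t1 p * W \<rho> k x t1) + (\<Sum>j\<in>-I. Ld * W \<rho> j x t1)"
          using eq by (simp add: sum.distrib)
        also have "\<dots> \<ge> (\<Sum>j\<in>-I. - Ld * W \<rho> j x t1 + \<delta> * (\<Sum>k\<in>I. Df j k x t1 p))
              + (\<Sum>j\<in>-I. Ld * W \<rho> j x t1)"
          using rowlow by (intro add_right_mono sum_mono) auto
        moreover have "(\<Sum>j\<in>-I. - Ld * W \<rho> j x t1 + \<delta> * (\<Sum>k\<in>I. Df j k x t1 p))
              + (\<Sum>j\<in>-I. Ld * W \<rho> j x t1) = \<delta> * \<Phi> (x, t1, p)"
          unfolding \<Phi>_def by (simp add: sum.distrib sum_distrib_left sum_subtractf)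
        moreover have "\<delta> * \<Phi> (x, t1, p) > 0" using \<delta>(1) \<Phi>x c0 by auto
        ultimately have "(\<Sum>j\<in>-I. f j x t1 (U x t1) - f j x t1 (\<rho> *\<^sub>R V x t1) + Ld * W \<rho> j x t1) > 0"
          by linarith
        hence "\<exists>j\<in>-I. f j x t1 (U x t1) - f j x t1 (\<rho> *\<^sub>R V x t1) + Ld * W \<rho> j x t1 > 0"
          by (meson not_le sum_nonpos)
        then obtain j where j: "j \<in> - I" "f j x t1 (U x t1) - f j x t1 (\<rho> *\<^sub>R V x t1) + Ld * W \<rho> j x t1 > 0"
          by blast
        hence "hW \<rho> j x t1 > 0" using hW_ge(2)[OF rho0 rho1 Rge xc t1(1), of j] by linarith
        thus "\<exists>j\<in>-I. P \<rho> j x" using P_if_pos[OF rho0 rho1 Rge xc t1(1)] j(1) by blast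
      qed
    qed
    thus ?thesis ..
  qed
qed

end

lemma U_ge_V: "\<forall>x\<in>cl. \<forall>t\<in>{0..T}. vge (U x t) (V x t)"
proof -
  define S where "S = {\<rho>. 0 \<le> \<rho> \<and> \<rho> \<le> 1 \<and> (\<forall>x\<in>cl. \<forall>t\<in>{0..T}. \<forall>i. \<rho> * V x t $ i \<le> U x t $ i)}"
  have S0: "0 \<in> S" unfolding S_def mem_Collect_eq using U_pos by (simp add: less_imp_le)
  have Sb: "bdd_above S" unfolding S_def by (auto intro: bdd_aboveI[of _ 1])
  define rs where "rs = Sup S"
  have rs0: "0 \<le> rs" unfolding rs_def using cSup_upper[OF S0 Sb] .
  have rs1: "rs \<le> 1" unfolding rs_def
  proof (rule cSup_least)
    show "S \<noteq> {}" using S0 by blast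
  next
    fix r assume "r \<in> S" thus "r \<le> 1" by (simp add: S_def)
  qed
  have rsS: "rs * V x t $ i \<le> U x t $ i" if x: "x \<in> cl" and t: "t \<in> {0..T}" for x t i
  proof -
    have Vp: "V x t $ i > 0" using V_pos[OF x t] .
    have "rs \<le> U x t $ i / V x t $ i" unfolding rs_def
    proof (rule cSup_least)
      show "S \<noteq> {}" using S0 by auto
      fix r assume "r \<in> S"
      hence "r * V x t $ i \<le> U x t $ i" unfolding S_def using x t by auto
      thus "r \<le> U x t $ i / V x t $ i" using Vp by (simp add: field_simps)
    qed
    thus ?thesis using Vp by (simp add: field_simps)
  qed
  have "rs = 1"
  proof (rule ccontr)
    assume "rs \<noteq> 1"
    hence rs1': "rs < 1" using rs1 by auto
    obtain \<epsilon> where \<epsilon>: "\<epsilon> > 0" "\<And>x t i. x \<in> cl \<Longrightarrow> t \<in> {0..T} \<Longrightarrow> (rs + \<epsilon>) * V x t $ i \<le> U x t $ i"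
      using step[OF rs0 rs1' rsS] by blast
    define r' where "r' = min 1 (rs + \<epsilon>)"
    have "r' \<in> S" unfolding S_def
    proof (safe)
      show "0 \<le> r'" "r' \<le> 1" unfolding r'_def using rs0 \<epsilon> by auto
      fix x t i assume x: "x \<in> cl" and t: "t \<in> {0..T}"
      have "r' * V x t $ i \<le> (rs + \<epsilon>) * V x t $ i"
        using V_pos[OF x t, of i] unfolding r'_def by (intro mult_right_mono) auto
      thus "r' * V x t $ i \<le> U x t $ i" using \<epsilon>(2)[OF x t, of i] by linarith
    qed
    hence "r' \<le> rs" unfolding rs_def by (rule cSup_upper[OF _ Sb])
    thus False using rs1' \<epsilon>(1) unfolding r'_def by auto
  qed
  thus ?thesis using rsS unfolding vge_def by auto
qed

end

theorem theorem4p4: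
  fixes \<Omega> :: "(real^'n) set" and T :: real
    and d :: "'m::finite \<Rightarrow> real"
    and J :: "'m \<Rightarrow> real^'n \<Rightarrow> real^'n \<Rightarrow> real"
    and dstar :: "'m \<Rightarrow> real^'n \<Rightarrow> real"
    and f :: "'m \<Rightarrow> real^'n \<Rightarrow> real \<Rightarrow> real^'m \<Rightarrow> real"
    and Df :: "'m \<Rightarrow> 'm \<Rightarrow> real^'n \<Rightarrow> real \<Rightarrow> real^'m \<Rightarrow> real"
    and U V :: "real^'n \<Rightarrow> real \<Rightarrow> real^'m"
  assumes dom: "open \<Omega>" "connected \<Omega>" "bounded \<Omega>" "\<Omega> \<noteq> {}"
    and T_pos: "T > 0"
    and d_pos: "\<And>i. d i > 0"
    and J_cont: "\<And>i. continuous_on UNIV (\<lambda>(x,y). J i x y)"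
    and J_nonneg: "\<And>i x y. J i x y \<ge> 0"
    and J_diag: "\<And>i x. J i x x > 0"
    and J_int: "\<And>i x. integrable lebesgue (\<lambda>y. J i x y)
                        \<and> (\<integral>y. J i x y \<partial>lebesgue) = 1"
    and dstar_def: "\<And>i. dstar i = (\<lambda>x. d i)
                       \<or> dstar i = (\<lambda>x. d i * (LINT y:\<Omega>|lebesgue. J i y x))"
    \<comment> \<open>(F1)\<close>
    and F1_per: "\<And>i x t u. f i x (t + T) u = f i x t u"
    and F1_zero: "\<And>i x t. f i x t 0 = 0"
    and F1_cont: "\<And>i. continuous_on (closure \<Omega> \<times> {0..T} \<times> nonneg_orthant)
                         (\<lambda>(x,t,u). f i x t u)"
    and F1_Dcont: "\<And>i k. continuous_on (closure \<Omega> \<times> {0..T} \<times> nonneg_orthant)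
                         (\<lambda>(x,t,u). Df i k x t u)"
    and F1_deriv: "\<And>i x t u. x \<in> closure \<Omega> \<Longrightarrow> t \<in> {0..T} \<Longrightarrow> u \<in> nonneg_orthant \<Longrightarrow>
                     (f i x t has_derivative (\<lambda>h. \<Sum>k\<in>UNIV. Df i k x t u * h $ k))
                       (at u within nonneg_orthant)"
    and F1_coop: "\<And>i k x t u. x \<in> closure \<Omega> \<Longrightarrow> t \<in> {0..T} \<Longrightarrow> u \<in> nonneg_orthant \<Longrightarrow>
                     k \<noteq> i \<Longrightarrow> Df i k x t u \<ge> 0"
    \<comment> \<open>(F2)\<close>
    and F2: "\<exists>x0\<in>closure \<Omega>. \<exists>t0\<in>{0..T}. \<forall>u\<in>nonneg_orthant.
               irreducible_matrix (\<lambda>i k. Df i k x0 t0 u)"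
    \<comment> \<open>(F3)\<close>
    and F3: "\<And>\<rho> x t u. 0 < \<rho> \<Longrightarrow> \<rho> < 1 \<Longrightarrow> x \<in> closure \<Omega> \<Longrightarrow> t \<in> {0..T} \<Longrightarrow>
               vgg u 0 \<Longrightarrow> vgt (\<chi> i. f i x t (\<rho> *\<^sub>R u)) (\<rho> *\<^sub>R (\<chi> i. f i x t u))"
    \<comment> \<open>two bounded positive solutions in Z^m\<close>
    and U_Z: "Z_space \<Omega> T U" and U_sol: "is_periodic_solution \<Omega> T d J dstar f U"
    and U_bp: "bounded_positive \<Omega> T U"
    and V_Z: "Z_space \<Omega> T V" and V_sol: "is_periodic_solution \<Omega> T d J dstar f V"
    and V_bp: "bounded_positive \<Omega> T V"
  shows "\<forall>x\<in>closure \<Omega>. \<forall>t\<in>{0..T}. U x t = V x t"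
  proof -
  have UV: "uniq \<Omega> T d J dstar f Df U V"
    by unfold_locales (fact assms)+
  have VU: "uniq \<Omega> T d J dstar f Df V U"
    by unfold_locales (fact assms)+
  have 1: "\<forall>x\<in>closure \<Omega>. \<forall>t\<in>{0..T}. vge (U x t) (V x t)" by (rule uniq.U_ge_V[OF UV])
  have 2: "\<forall>x\<in>closure \<Omega>. \<forall>t\<in>{0..T}. vge (V x t) (U x t)" by (rule uniq.U_ge_V[OF VU])
  show ?thesis
  proof (intro ballI)
    fix x t assume "x \<in> closure \<Omega>" "t \<in> {0..T}"
    thus "U x t = V x t" using 1 2 unfolding vge_def by (auto simp: vec_eq_iff intro: antisym)
  qed
qed

end
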